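(* Let $r\ge 1$ be an integer and let $A$ and $B$ be disjoint vertex sets with $|B|\le |A|/r^{r+3}$. Suppose the edges of the complete bipartite graph between $A$ and $B$ are $r$-locally coloured. Then all vertices of $B$ can be covered by at most $r^2$ vertex-disjoint monochromatic cycles of this bipartite graph.
   Context: An edge colouring of a graph is an $r$-local colouring if the edges incident to any vertex are coloured with at most $r$ colours; the total number of colours is not restricted. A cycle is monochromatic if all its edges have the same colour; a single vertex and a single edge are also considered to be cycles. *)

theory Defs
  imports Complex_Main
begin

text \<open>Edges of the complete bipartite graph between A and B are the doubletons {a,b}
  with a in A and b in B; an edge colouring is a function on such doubletons.\<close>

definition bip_edge :: "'a set \<Rightarrow> 'a set \<Rightarrow> 'a \<Rightarrow> 'a \<Rightarrow> bool" where
  "bip_edge A B x y \<longleftrightarrow> (x \<in> A \<and> y \<in> B) \<or> (x \<in> B \<and> y \<in> A)"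

definition local_colouring :: "nat \<Rightarrow> 'a set \<Rightarrow> 'a set \<Rightarrow> ('a set \<Rightarrow> 'c) \<Rightarrow> bool" where
  "local_colouring r A B c \<longleftrightarrow>
     (\<forall>a\<in>A. card ((\<lambda>b. c {a, b}) ` B) \<le> r) \<and>
     (\<forall>b\<in>B. card ((\<lambda>a. c {a, b}) ` A) \<le> r)"

text \<open>A monochromatic cycle of colour col in the bipartite graph, given by its list of
  distinct vertices in cyclic order. One vertex = single vertex; two vertices = single edge.\<close>
definition mono_cycle :: "'a set \<Rightarrow> 'a set \<Rightarrow> ('a set \<Rightarrow> 'c) \<Rightarrow> 'c \<Rightarrow> 'a list \<Rightarrow> bool" where
  "mono_cycle A B c col vs \<longleftrightarrow>
     vs \<noteq> [] \<and> distinct vs \<and> set vs \<subseteq> A \<union> B \<and>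
     (length vs \<ge> 2 \<longrightarrow>
        (\<forall>i < length vs. bip_edge A B (vs ! i) (vs ! (Suc i mod length vs)) \<and>
                         c {vs ! i, vs ! (Suc i mod length vs)} = col))"

end

theory Submission
  imports Defs
begin

lemma fiber_count:
  assumes "finite K"
  shows "2 * card K \<le> 2 * card (g ` K) + card {(u,v)\<in>K\<times>K. u \<noteq> v \<and> g u = g v}"
  using assms
proof (induction K rule: finite_induct)
  case empty then show ?case by simp
next
  case (insert x K)
  define P where "P = (\<lambda>K. {(u,v)\<in>K\<times>K. u \<noteq> v \<and> g u = g v})"
  have fin: "finite (P (insert x K))"
    by (rule finite_subset[of _ "insert x K \<times> insert x K"]) (use insert.hyps in \<open>auto simp: P_def\<close>)
  have fk: "finite (P K)"
    by (rule finite_subset[of _ "K \<times> K"]) (use insert.hyps in \<open>auto simp: P_def\<close>)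
  have IH: "2 * card K \<le> 2 * card (g ` K) + card (P K)" using insert.IH by (simp add: P_def)
  have "2 * card (insert x K) \<le> 2 * card (g ` insert x K) + card (P (insert x K))"
  proof (cases "g x \<in> g ` K")
    case True
    then obtain y where y: "y \<in> K" "g y = g x" by auto
    have xy: "x \<noteq> y" using y insert.hyps by auto
    have sub: "insert (x,y) (insert (y,x) (P K)) \<subseteq> P (insert x K)"
      using y xy unfolding P_def by auto
    have nin: "(x,y) \<notin> P K" "(y,x) \<notin> P K" using insert.hyps unfolding P_def by auto
    have "card (insert (x,y) (insert (y,x) (P K))) = card (P K) + 2"
      using fk nin xy by simp
    then have "card (P K) + 2 \<le> card (P (insert x K))"
      using card_mono[OF fin sub] by simp
    moreover have "g ` insert x K = g ` K" using True by auto
    ultimately show ?thesis using IH insert.hyps by simp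
  next
    case False
    have "P K \<subseteq> P (insert x K)" unfolding P_def by auto
    then have "card (P K) \<le> card (P (insert x K))" using card_mono[OF fin] by simp
    moreover have "card (g ` insert x K) = Suc (card (g ` K))" using False insert.hyps by simp
    ultimately show ?thesis using IH insert.hyps by simp
  qed
  then show ?case unfolding P_def .
qed


lemma sum_card_swap:
  assumes "finite X" "finite Y"
  shows "(\<Sum>y\<in>Y. card {x\<in>X. P x y}) = (\<Sum>x\<in>X. card {y\<in>Y. P x y})"
proof -
  have "(\<Sum>y\<in>Y. card {x\<in>X. P x y}) = (\<Sum>y\<in>Y. \<Sum>x\<in>X. of_bool (P x y))"
    using assms by (simp add: Int_def conj_commute)
  also have "\<dots> = (\<Sum>x\<in>X. \<Sum>y\<in>Y. of_bool (P x y))" by (rule sum.swap)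
  also have "\<dots> = (\<Sum>x\<in>X. card {y\<in>Y. P x y})"
    using assms by (simp add: Int_def conj_commute)
  finally show ?thesis .
qed



lemma sdr:
  assumes "m \<le> n" "\<forall>i<m. finite (G i) \<and> n \<le> card (G i)"
  shows "\<exists>a. inj_on a {..<m} \<and> (\<forall>i<m. a i \<in> G i)"
  using assms
proof (induction m)
  case 0 then show ?case by simp
next
  case (Suc m)
  then obtain a where a: "inj_on a {..<m}" "\<forall>i<m. a i \<in> G i" by auto
  have "card (G m) - card (a ` {..<m}) \<le> card (G m - a ` {..<m})"
    by (rule diff_card_le_card_Diff) simp
  moreover have "card (a ` {..<m}) \<le> m" using card_image_le[of "{..<m}" a] by simp
  moreover have "n \<le> card (G m)" using Suc.prems by auto
  ultimately have "card (G m - a ` {..<m}) > 0" using Suc.prems by linarith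
  then obtain y where y: "y \<in> G m" "y \<notin> a ` {..<m}"
    by (metis all_not_in_conv card.empty less_irrefl Diff_iff)
  have "inj_on (a(m := y)) {..<Suc m}"
  proof -
    have "inj_on (a(m := y)) {..<m}" by (rule inj_on_fun_updI) (use a y in auto)
    moreover have "(a(m:=y)) m \<notin> (a(m:=y)) ` {..<m}" using y by auto
    ultimately show ?thesis by (simp add: lessThan_Suc)
  qed
  moreover have "\<forall>i<Suc m. (a(m := y)) i \<in> G i" using a y by (auto simp: less_Suc_eq)
  ultimately show ?case by blast
qed



lemma posa:
  fixes H :: "'a \<Rightarrow> 'a \<Rightarrow> bool"
  assumes fin: "finite S" and ne: "S \<noteq> {}" and sym: "\<And>u v. H u v \<Longrightarrow> H v u"
  shows "\<exists>q. q \<noteq> [] \<and> distinct q \<and> set q \<subseteq> S \<and>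
     (2 \<le> length q \<longrightarrow> (\<forall>i<length q. H (q!i) (q!(Suc i mod length q)))) \<and>
     (\<forall>z\<in>S. H (hd q) z \<longrightarrow> z \<in> set q)"
proof -
  define P where "P p \<longleftrightarrow> p \<noteq> [] \<and> distinct p \<and> set p \<subseteq> S \<and>
      (\<forall>i. Suc i < length p \<longrightarrow> H (p!i) (p!Suc i))" for p
  obtain s where s: "s \<in> S" using ne by auto
  have Ps: "P [s]" using s by (simp add: P_def)
  have bnd: "\<forall>p. P p \<longrightarrow> length p < Suc (card S)"
  proof (intro allI impI)
    fix p assume "P p"
    then have "card (set p) \<le> card S" "card (set p) = length p"
      using card_mono[OF fin] distinct_card by (auto simp: P_def)
    then show "length p < Suc (card S)" by simp
  qed
  obtain p where Pp: "P p" and mx: "\<forall>p'. P p' \<longrightarrow> length p' \<le> length p"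
    using Lattices_Big.ex_has_greatest_nat[of P "[s]" length, OF Ps bnd] by blast
  have pne: "p \<noteq> []" and pd: "distinct p" and ps: "set p \<subseteq> S"
    and pc: "\<And>i. Suc i < length p \<Longrightarrow> H (p!i) (p!Suc i)" using Pp by (auto simp: P_def)
  have hdp: "hd p = p!0" using pne by (simp add: hd_conv_nth)
  have nb: "z \<in> set p" if "z \<in> S" "H (hd p) z" for z
  proof (rule ccontr)
    assume zn: "z \<notin> set p"
    have "P (z # p)"
      unfolding P_def
    proof (intro conjI allI impI)
      show "distinct (z # p)" using zn pd by simp
      show "set (z # p) \<subseteq> S" using that ps by simp
      fix i assume i: "Suc i < length (z # p)"
      show "H ((z # p) ! i) ((z # p) ! Suc i)"
      proof (cases i)
        case 0 then show ?thesis using sym[OF that(2)] hdp by simp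
      next
        case (Suc j) then show ?thesis using pc i by simp
      qed
    qed simp
    then show False using mx by fastforce
  qed
  define J where "J = {i. i < length p \<and> H (hd p) (p!i)}"
  define j where "j = (if J = {} then 0 else Max J)"
  have finJ: "finite J" unfolding J_def by simp
  have jlt: "j < length p" using pne finJ Max_in[OF finJ] unfolding j_def by (auto simp: J_def)
  define q where "q = take (Suc j) p"
  have lq: "length q = Suc j" using jlt unfolding q_def by simp
  have qnth: "\<And>i. i \<le> j \<Longrightarrow> q!i = p!i" unfolding q_def by simp
  have "q \<noteq> []" using lq by auto
  moreover have "distinct q" using pd unfolding q_def by simp
  moreover have "set q \<subseteq> S" using ps set_take_subset[of "Suc j" p] unfolding q_def by blast
  moreover have "2 \<le> length q \<longrightarrow> (\<forall>i<length q. H (q!i) (q!(Suc i mod length q)))"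
  proof (intro impI allI)
    assume "2 \<le> length q"
    then have "J \<noteq> {}" using lq unfolding j_def by (auto split: if_splits)
    then have "j \<in> J" using Max_in[OF finJ] unfolding j_def by simp
    then have Hj: "H (hd p) (p!j)" unfolding J_def by simp
    fix i assume i: "i < length q"
    show "H (q!i) (q!(Suc i mod length q))"
    proof (cases "Suc i < length q")
      case True then show ?thesis using pc[of i] jlt lq qnth by simp
    next
      case False
      then have "i = j" using i lq by simp
      then show ?thesis using sym[OF Hj] lq qnth hdp by simp
    qed
  qed
  moreover have "\<forall>z\<in>S. H (hd q) z \<longrightarrow> z \<in> set q"
  proof (intro ballI impI)
    fix z assume z: "z \<in> S" "H (hd q) z"
    have "hd q = hd p" using pne unfolding q_def by (simp add: hd_take)
    then have "z \<in> set p" using nb z by simp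
    then obtain i where i: "i < length p" "p!i = z" by (auto simp: in_set_conv_nth)
    then have "i \<in> J" using z \<open>hd q = hd p\<close> unfolding J_def by simp
    then have "i \<le> j" using Max_ge[OF finJ] unfolding j_def by auto
    then show "z \<in> set q" using i qnth lq by (metis le_imp_less_Suc nth_mem)
  qed
  ultimately show ?thesis by blast
qed


locale lsetup =
  fixes r :: nat and A B :: "'a set" and c :: "'a set \<Rightarrow> 'c"
  assumes r1: "r \<ge> 1" and finA: "finite A" and finB: "finite B" and disj: "A \<inter> B = {}"
    and bnd: "r ^ (r + 3) * card B \<le> card A"
    and loc: "local_colouring r A B c"
begin

definition N where "N x b = {a\<in>A. c {a, b} = x}"

lemma N_sub: "N x b \<subseteq> A" unfolding N_def by auto

lemma exists_big: assumes "b \<in> B" shows "\<exists>x. card A \<le> r * card (N x b)"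
proof (cases "A = {}")
  case True then show ?thesis by simp
next
  case False
  define Col where "Col = (\<lambda>a. c {a, b}) ` A"
  have cc: "card Col \<le> r" using loc assms unfolding local_colouring_def Col_def by auto
  have fc: "finite Col" using finA unfolding Col_def by simp
  have cne: "Col \<noteq> {}" using False unfolding Col_def by simp
  define M where "M = Max ((\<lambda>x. card (N x b)) ` Col)"
  have "M \<in> (\<lambda>x. card (N x b)) ` Col" unfolding M_def using fc cne by (intro Max_in) auto
  then obtain x where x: "x \<in> Col" "M = card (N x b)" by auto
  have "A = (\<Union>y\<in>Col. N y b)" unfolding Col_def N_def by auto
  then have "card A \<le> (\<Sum>y\<in>Col. card (N y b))" using card_UN_le[OF fc] by metis
  also have "\<dots> \<le> card Col * M"
    using sum_bounded_above[of Col "\<lambda>y. card (N y b)" M] fc unfolding M_def by auto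
  also have "\<dots> \<le> r * M" using cc by simp
  finally show ?thesis using x by blast
qed

definition xb where "xb b = (SOME x. card A \<le> r * card (N x b))"

lemma xb: "b \<in> B \<Longrightarrow> card A \<le> r * card (N (xb b) b)"
  unfolding xb_def using exists_big by (rule someI_ex) 

definition H where
  "H u v \<longleftrightarrow> u \<noteq> v \<and> xb u = xb v \<and> card B \<le> card (N (xb u) u \<inter> N (xb u) v)"

lemma H_sym: "H u v \<Longrightarrow> H v u"
  unfolding H_def by (auto simp: Int_commute)

lemma indep_bound:
  assumes JB: "J \<subseteq> B" and ind: "\<forall>u\<in>J. \<forall>v\<in>J. \<not> H u v"
  shows "card J \<le> r ^ 2"
proof (rule ccontr)
  assume "\<not> card J \<le> r ^ 2"
  then obtain J' where J': "J' \<subseteq> J" "card J' = r^2 + 1" "finite J'"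
    using obtain_subset_with_card_n[of "r^2+1" J] by force
  have JB': "J' \<subseteq> B" using J' JB by auto
  have ind': "\<forall>u\<in>J'. \<forall>v\<in>J'. \<not> H u v" using ind J' by auto
  define n where "n = r^2 + 1"
  define S where "S = (\<Sum>b\<in>J'. card (N (xb b) b))"
  have cB: "card B \<ge> 1"
  proof -
    have "card J' \<le> card B" using JB' finB by (rule card_mono[rotated])
    then show ?thesis using J'(2) by simp
  qed
  have s1: "n * card A \<le> r * S"
  proof -
    have "n * card A = (\<Sum>b\<in>J'. card A)" using J' n_def by simp
    also have "\<dots> \<le> (\<Sum>b\<in>J'. r * card (N (xb b) b))" using JB' xb by (intro sum_mono) auto
    also have "\<dots> = r * S" unfolding S_def by (simp add: sum_distrib_left)
    finally show ?thesis .
  qed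
  define K where "K a = {b\<in>J'. a \<in> N (xb b) b}" for a
  define Q where "Q = {(u,v)\<in>J'\<times>J'. u \<noteq> v \<and> xb u = xb v}"
  define Pa where "Pa a = {p\<in>Q. a \<in> N (xb (fst p)) (fst p) \<and> a \<in> N (xb (snd p)) (snd p)}" for a
  have finQ: "finite Q" unfolding Q_def
    by (rule finite_subset[of _ "J' \<times> J'"]) (use J'(3) in auto)
  have S_eq: "S = (\<Sum>a\<in>A. card (K a))"
  proof -
    have "S = (\<Sum>b\<in>J'. card {a\<in>A. a \<in> N (xb b) b})"
      unfolding S_def using N_sub by (intro sum.cong refl arg_cong[where f=card]) blast
    also have "\<dots> = (\<Sum>a\<in>A. card (K a))" unfolding K_def by (rule sum_card_swap[OF finA J'(3)])
    finally show ?thesis .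
  qed
  have perA: "2 * card (K a) \<le> 2 * r + card (Pa a)" if a: "a \<in> A" for a
  proof -
    have fK: "finite (K a)" using J'(3) unfolding K_def by simp
    have "xb ` K a \<subseteq> (\<lambda>b. c {a, b}) ` B" using JB' unfolding K_def N_def by force
    moreover have "card ((\<lambda>b. c {a, b}) ` B) \<le> r" using loc a unfolding local_colouring_def by auto
    ultimately have "card (xb ` K a) \<le> r" using finB by (meson card_mono finite_imageI le_trans)
    moreover have "{(u,v)\<in>K a \<times> K a. u \<noteq> v \<and> xb u = xb v} = Pa a"
      unfolding Pa_def Q_def K_def by auto
    ultimately show ?thesis using fiber_count[OF fK, of xb] by simp
  qed
  have s2: "2 * S \<le> 2 * r * card A + (\<Sum>a\<in>A. card (Pa a))"
  proof -
    have "2 * S = (\<Sum>a\<in>A. 2 * card (K a))" using S_eq by (simp add: sum_distrib_left)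
    also have "\<dots> \<le> (\<Sum>a\<in>A. 2 * r + card (Pa a))" using perA by (intro sum_mono) auto
    also have "\<dots> = 2 * r * card A + (\<Sum>a\<in>A. card (Pa a))" by (simp add: sum.distrib)
    finally show ?thesis .
  qed
  have s3: "(\<Sum>a\<in>A. card (Pa a)) \<le> n * r^2 * (card B - 1)"
  proof -
    have "(\<Sum>a\<in>A. card (Pa a)) = (\<Sum>p\<in>Q. card {a\<in>A. a \<in> N (xb (fst p)) (fst p) \<and> a \<in> N (xb (snd p)) (snd p)})"
      unfolding Pa_def by (rule sum_card_swap[OF finA finQ, symmetric])
    also have "\<dots> \<le> (\<Sum>p\<in>Q. card B - 1)"
    proof (intro sum_mono)
      fix p assume p: "p \<in> Q"
      obtain u v where uv: "p = (u,v)" "u \<in> J'" "v \<in> J'" "u \<noteq> v" "xb u = xb v"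
        using p unfolding Q_def by auto
      have "{a\<in>A. a \<in> N (xb (fst p)) (fst p) \<and> a \<in> N (xb (snd p)) (snd p)} = N (xb u) u \<inter> N (xb u) v"
        using uv N_sub by auto
      moreover have "\<not> H u v" using ind' uv by auto
      ultimately show "card {a\<in>A. a \<in> N (xb (fst p)) (fst p) \<and> a \<in> N (xb (snd p)) (snd p)} \<le> card B - 1"
        using uv unfolding H_def by auto
    qed
    also have "\<dots> = card Q * (card B - 1)" by simp
    also have "\<dots> \<le> n * r^2 * (card B - 1)"
    proof -
      have "Q \<subseteq> Sigma J' (\<lambda>u. J' - {u})" unfolding Q_def by auto
      then have "card Q \<le> card (Sigma J' (\<lambda>u. J' - {u}))"
        using J'(3) by (intro card_mono) auto
      also have "\<dots> = (\<Sum>u\<in>J'. card (J' - {u}))" using J'(3) by (simp add: card_SigmaI)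
      also have "\<dots> = (\<Sum>u\<in>J'. r^2)" using J' by (intro sum.cong) auto
      also have "\<dots> = n * r^2" using J' n_def by simp
      finally show ?thesis by simp
    qed
    finally show ?thesis .
  qed
  have "2 * n * card A \<le> 2 * r * r * card A + r * (n * r^2 * (card B - 1))"
  proof -
    have "2 * n * card A \<le> 2 * (r * S)" using s1 by simp
    also have "\<dots> = r * (2 * S)" by simp
    also have "\<dots> \<le> r * (2 * r * card A + n * r^2 * (card B - 1))"
      using s2 s3 by (intro mult_le_mono2) simp
    finally show ?thesis by (simp add: algebra_simps)
  qed
  then have "2 * card A \<le> r * (n * r^2 * (card B - 1))"
    unfolding n_def by (simp add: algebra_simps power2_eq_square)
  also have "\<dots> < r^3 * n * card B"
  proof -
    have "r * (n * r^2 * (card B - 1)) = r^3 * n * (card B - 1)" by (simp add: power2_eq_square power3_eq_cube)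
    moreover have "r^3 * n > 0" using r1 n_def by simp
    moreover have "card B - 1 < card B" using cB by simp
    ultimately show ?thesis by (metis mult_less_mono2)
  qed
  also have "\<dots> \<le> r^3 * (2 * r^r) * card B"
  proof -
    have "r^2 + 1 \<le> 2 * r^r"
    proof (cases "r = 1")
      case True then show ?thesis by simp
    next
      case False
      then have "r \<ge> 2" using r1 by simp
      then have "r^2 \<le> r^r" by (intro power_increasing) auto
      moreover have "1 \<le> r^r" using r1 by simp
      ultimately show ?thesis by simp
    qed
    then show ?thesis unfolding n_def by (intro mult_le_mono) auto
  qed
  also have "\<dots> = 2 * (r^(r+3) * card B)" by (simp add: power_add)
  also have "\<dots> \<le> 2 * card A" using bnd by simp
  finally show False by simp
qed

end


context lsetup begin

lemma realize:
  assumes qne: "q \<noteq> []" and qd: "distinct q" and qB: "set q \<subseteq> B"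
    and qc: "2 \<le> length q \<longrightarrow> (\<forall>i<length q. H (q!i) (q!(Suc i mod length q)))"
    and UA: "U \<subseteq> A" and cU: "card U + length q \<le> card B"
  shows "\<exists>cyc col W. mono_cycle A B c col cyc \<and> set cyc = set q \<union> W \<and> W \<subseteq> A - U \<and> card W \<le> length q"
proof (cases "length q = 1")
  case True
  have "mono_cycle A B c (c {}) q" using qne qd qB True unfolding mono_cycle_def by auto
  then show ?thesis by (intro exI[of _ q] exI[of _ "c {}"] exI[of _ "{}"]) auto
next
  case False
  define m where "m = length q"
  have m2: "2 \<le> m" using False qne unfolding m_def by (metis One_nat_def Suc_1 Suc_leI le_neq_implies_less length_greater_0_conv)
  have Hq: "\<And>i. i < m \<Longrightarrow> H (q!i) (q!(Suc i mod m))" using qc m2 unfolding m_def by auto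
  define x where "x = xb (q!0)"
  have xq: "i < m \<Longrightarrow> xb (q!i) = x" for i
  proof (induction i)
    case 0 then show ?case by (simp add: x_def)
  next
    case (Suc i)
    then have "H (q!i) (q!(Suc i mod m))" using Hq[of i] by simp
    then have "H (q!i) (q!(Suc i))" using Suc.prems by simp
    then show ?case using Suc by (simp add: H_def)
  qed
  define G where "G i = (N x (q!i) \<inter> N x (q!(Suc i mod m))) - U" for i
  have finU: "finite U" using UA finA by (rule finite_subset)
  have "\<forall>i<m. finite (G i) \<and> m \<le> card (G i)"
  proof (intro allI impI conjI)
    fix i assume i: "i < m"
    show "finite (G i)" unfolding G_def using finite_subset[OF N_sub finA] by blast
    have "card B \<le> card (N x (q!i) \<inter> N x (q!(Suc i mod m)))"
    proof -
      have "card B \<le> card (N (xb (q!i)) (q!i) \<inter> N (xb (q!i)) (q!(Suc i mod m)))"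
        using Hq[OF i] unfolding H_def by blast
      then show ?thesis unfolding xq[OF i] .
    qed
    moreover have "card (N x (q!i) \<inter> N x (q!(Suc i mod m))) - card U \<le> card (G i)"
      unfolding G_def by (rule diff_card_le_card_Diff[OF finU])
    ultimately show "m \<le> card (G i)" using cU unfolding m_def by linarith
  qed
  then obtain a where ainj: "inj_on a {..<m}" and aG: "\<forall>i<m. a i \<in> G i"
    using sdr[of m m G] by auto
  have aA: "i < m \<Longrightarrow> a i \<in> A" for i using aG N_sub unfolding G_def by blast
  have qBi: "i < m \<Longrightarrow> q!i \<in> B" for i using qB unfolding m_def by auto
  define f where "f n = (if even n then q!(n div 2) else a (n div 2))" for n
  define cyc where "cyc = map f [0..<2*m]"
  define W where "W = a ` {..<m}"
  have lc: "length cyc = 2*m" unfolding cyc_def by simp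
  have cn: "n < 2*m \<Longrightarrow> cyc!n = f n" for n unfolding cyc_def by simp
  have setc: "set cyc = set q \<union> W"
  proof
    show "set cyc \<subseteq> set q \<union> W"
    proof
      fix y assume "y \<in> set cyc"
      then obtain n where n: "n < 2*m" "y = f n" unfolding cyc_def by auto
      then have "n div 2 < m" by simp
      then show "y \<in> set q \<union> W" using n unfolding f_def W_def m_def by (auto split: if_splits)
    qed
    show "set q \<union> W \<subseteq> set cyc"
    proof
      fix y assume "y \<in> set q \<union> W"
      then obtain i where i: "i < m" "y = q!i \<or> y = a i"
        unfolding W_def m_def by (auto simp: in_set_conv_nth)
      have "f (2*i) = q!i" "f (2*i+1) = a i" unfolding f_def by auto
      moreover have "2*i < 2*m" "2*i+1 < 2*m" using i by auto
      moreover have "f (2*i) \<in> set cyc" "f (2*i+1) \<in> set cyc"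
        using \<open>2*i < 2*m\<close> \<open>2*i+1 < 2*m\<close> unfolding cyc_def by auto
      ultimately show "y \<in> set cyc" using i by auto
    qed
  qed
  have WA: "W \<subseteq> A - U" unfolding W_def using aG unfolding G_def N_def by auto
  have cW: "card W \<le> length q" unfolding W_def m_def[symmetric]
    using card_image_le[of "{..<m}" a] by simp
  have "mono_cycle A B c x cyc"
    unfolding mono_cycle_def
  proof (intro conjI impI)
    show "cyc \<noteq> []" using lc m2 by auto
    show "distinct cyc" unfolding cyc_def distinct_map
    proof (intro conjI)
      show "inj_on f (set [0..<2*m])"
      proof (rule inj_onI)
        fix n1 n2 assume n: "n1 \<in> set [0..<2*m]" "n2 \<in> set [0..<2*m]" and e: "f n1 = f n2"
        have d: "n1 div 2 < m" "n2 div 2 < m" using n by auto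
        show "n1 = n2"
        proof (cases "even n1"; cases "even n2")
          assume "even n1" "even n2"
          then have "q!(n1 div 2) = q!(n2 div 2)" using e unfolding f_def by simp
          then have "n1 div 2 = n2 div 2" using qd d unfolding m_def by (simp add: nth_eq_iff_index_eq)
          then show ?thesis using \<open>even n1\<close> \<open>even n2\<close> by (metis dvd_mult_div_cancel)
        next
          assume "odd n1" "odd n2"
          then have "a (n1 div 2) = a (n2 div 2)" using e unfolding f_def by simp
          then have "n1 div 2 = n2 div 2" using ainj d by (auto dest: inj_onD)
          then show ?thesis using \<open>odd n1\<close> \<open>odd n2\<close> by (metis odd_two_times_div_two_succ)
        next
          assume "even n1" "odd n2"
          then have "q!(n1 div 2) = a (n2 div 2)" using e unfolding f_def by simp
          moreover have "q!(n1 div 2) \<in> B" "a (n2 div 2) \<in> A" using d qBi aA by auto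
          ultimately show ?thesis using disj by auto
        next
          assume "odd n1" "even n2"
          then have "a (n1 div 2) = q!(n2 div 2)" using e unfolding f_def by simp
          moreover have "q!(n2 div 2) \<in> B" "a (n1 div 2) \<in> A" using d qBi aA by auto
          ultimately show ?thesis using disj by auto
        qed
      qed
    qed simp
    show "set cyc \<subseteq> A \<union> B" using setc qB WA by auto
  next
    show "\<forall>n<length cyc. bip_edge A B (cyc ! n) (cyc ! (Suc n mod length cyc)) \<and> c {cyc ! n, cyc ! (Suc n mod length cyc)} = x"
    proof (intro allI impI)
    fix n assume n: "n < length cyc"
    then have n': "n < 2*m" using lc by simp
    let ?n = "Suc n mod length cyc"
    have "bip_edge A B (f n) (f ?n) \<and> c {f n, f ?n} = x"
    proof (cases "even n")
      case True
      then obtain i where i: "n = 2*i" by auto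
      have im: "i < m" using n' i by simp
      have "Suc n < 2*m" using n' i by presburger
      then have sn: "?n = 2*i+1" using lc i by simp
      have fn: "f n = q!i" "f ?n = a i" unfolding f_def using i sn by auto
      have "a i \<in> N x (q!i)" using aG im unfolding G_def by auto
      then have "c {a i, q!i} = x" unfolding N_def by auto
      then show ?thesis using fn qBi[OF im] aA[OF im] unfolding bip_edge_def
        by (simp add: insert_commute)
    next
      case False
      then obtain i where i: "n = 2*i+1" by (metis oddE)
      have im: "i < m" using n' i by simp
      have "?n = 2 * (Suc i mod m)" using lc i by (simp add: mod_mult_mult1[symmetric])
      then have fn: "f n = a i" "f ?n = q!(Suc i mod m)" unfolding f_def using i by auto
      have sm: "Suc i mod m < m" using m2 by simp
      have "a i \<in> N x (q!(Suc i mod m))" using aG im unfolding G_def by auto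
      then have "c {a i, q!(Suc i mod m)} = x" unfolding N_def by auto
      then show ?thesis using fn qBi[OF sm] aA[OF im] unfolding bip_edge_def by simp
    qed
    moreover have "?n < 2*m" using lc m2 by simp
    ultimately show "bip_edge A B (cyc ! n) (cyc ! ?n) \<and> c {cyc ! n, cyc ! ?n} = x"
      using cn n' by simp
  qed
  qed
  then show ?thesis using setc WA cW by blast
qed

end


context lsetup begin

lemma cover:
  assumes "finite S" "S \<subseteq> B" "U \<subseteq> A" "card U + card S \<le> card B"
  shows "\<exists>k C col I. I \<subseteq> S \<and> (\<forall>u\<in>I. \<forall>v\<in>I. \<not> H u v) \<and> k \<le> card I \<and>
     (\<forall>i<k. mono_cycle A B c (col i) (C i)) \<and>
     (\<forall>i<k. \<forall>j<k. i \<noteq> j \<longrightarrow> set (C i) \<inter> set (C j) = {}) \<and>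
     (\<forall>i<k. set (C i) \<subseteq> S \<union> (A - U)) \<and> S \<subseteq> (\<Union>i<k. set (C i))"
  using assms
proof (induction S arbitrary: U rule: finite_psubset_induct)
  case (psubset S)
  show ?case
  proof (cases "S = {}")
    case True
    show ?thesis by (rule exI[of _ 0]) (use True in auto)
  next
    case False
    obtain q where qne: "q \<noteq> []" and qd: "distinct q" and qS: "set q \<subseteq> S"
      and qc: "2 \<le> length q \<longrightarrow> (\<forall>i<length q. H (q!i) (q!(Suc i mod length q)))"
      and qn: "\<forall>z\<in>S. H (hd q) z \<longrightarrow> z \<in> set q"
      using posa[OF psubset.hyps(1) False, of H] H_sym by blast
    have lq: "length q = card (set q)" using qd by (simp add: distinct_card)
    have cqS: "card (set q) \<le> card S" using qS psubset.hyps(1) by (simp add: card_mono)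
    have "length q \<le> card S" using lq cqS by simp
    then have cU: "card U + length q \<le> card B" using psubset.prems by simp
    obtain cyc col0 W where cyc: "mono_cycle A B c col0 cyc" and sc: "set cyc = set q \<union> W"
      and WA: "W \<subseteq> A - U" and cW: "card W \<le> length q"
      using realize[OF qne qd _ qc psubset.prems(2) cU] qS psubset.prems(1) by blast
    define S' where "S' = S - set q"
    define U' where "U' = U \<union> W"
    have hq: "hd q \<in> set q" using qne by simp
    have psub: "S' \<subset> S" unfolding S'_def using hq qS by blast
    have finU: "finite U" using psubset.prems(2) finA by (rule finite_subset)
    have cU': "card U' \<le> card U + card W" unfolding U'_def by (rule card_Un_le)
    have cS': "card S' = card S - card (set q)" unfolding S'_def
      using qS psubset.hyps(1) by (simp add: card_Diff_subset finite_subset)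
    have h3: "card U' + card S' \<le> card B" using cU' cS' cW lq cqS psubset.prems(3) by linarith
    have h1: "S' \<subseteq> B" using psubset.prems(1) unfolding S'_def by auto
    have h2: "U' \<subseteq> A" using psubset.prems(2) WA unfolding U'_def by auto
    from psubset.IH[OF psub h1 h2 h3] obtain k C col I where IS: "I \<subseteq> S'" and Iind: "\<forall>u\<in>I. \<forall>v\<in>I. \<not> H u v"
      and kI: "k \<le> card I" and Cm: "\<forall>i<k. mono_cycle A B c (col i) (C i)"
      and Cd: "\<forall>i<k. \<forall>j<k. i \<noteq> j \<longrightarrow> set (C i) \<inter> set (C j) = {}"
      and Cs: "\<forall>i<k. set (C i) \<subseteq> S' \<union> (A - U')" and Cc: "S' \<subseteq> (\<Union>i<k. set (C i))"
      by blast
    define C2 where "C2 = C(k := cyc)"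
    define col2 where "col2 = col(k := col0)"
    define I2 where "I2 = insert (hd q) I"
    have qB: "set q \<subseteq> B" using qS psubset.prems(1) by auto
    have disjk: "set (C i) \<inter> set cyc = {}" if i: "i < k" for i
    proof -
      have "set (C i) \<subseteq> S' \<union> (A - U')" using Cs i by auto
      moreover have "S' \<inter> set q = {}" unfolding S'_def by auto
      moreover have "(A - U') \<inter> set q = {}" using qB disj by auto
      moreover have "S' \<inter> W = {}" using WA h1 disj by auto
      moreover have "(A - U') \<inter> W = {}" unfolding U'_def by auto
      ultimately show ?thesis using sc by blast
    qed
    have finI: "finite I" using IS psub psubset.hyps(1) by (meson finite_subset psubset_imp_subset)
    have hnI: "hd q \<notin> I" using IS hq unfolding S'_def by auto
    have "I2 \<subseteq> S" unfolding I2_def using IS hq qS psub by auto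
    moreover have "\<forall>u\<in>I2. \<forall>v\<in>I2. \<not> H u v"
    proof (intro ballI)
      fix u v assume uv: "u \<in> I2" "v \<in> I2"
      have nH: "\<not> H (hd q) w" if "w \<in> I" for w
      proof
        assume "H (hd q) w"
        moreover have "w \<in> S" "w \<notin> set q" using that IS unfolding S'_def by auto
        ultimately show False using qn by auto
      qed
      show "\<not> H u v"
      proof (cases "u = hd q"; cases "v = hd q")
        assume "u = hd q" "v = hd q" then show ?thesis by (simp add: H_def)
      next
        assume "u = hd q" "v \<noteq> hd q" then show ?thesis using nH uv unfolding I2_def by auto
      next
        assume "u \<noteq> hd q" "v = hd q" then show ?thesis using nH uv H_sym unfolding I2_def by blast
      next
        assume "u \<noteq> hd q" "v \<noteq> hd q" then show ?thesis using Iind uv unfolding I2_def by auto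
      qed
    qed
    moreover have "Suc k \<le> card I2" unfolding I2_def using kI finI hnI by simp
    moreover have "\<forall>i<Suc k. mono_cycle A B c (col2 i) (C2 i)"
      using Cm cyc unfolding C2_def col2_def by (auto simp: less_Suc_eq)
    moreover have "\<forall>i<Suc k. \<forall>j<Suc k. i \<noteq> j \<longrightarrow> set (C2 i) \<inter> set (C2 j) = {}"
      using Cd disjk unfolding C2_def by (auto simp: less_Suc_eq)
    moreover have "\<forall>i<Suc k. set (C2 i) \<subseteq> S \<union> (A - U)"
    proof (intro allI impI)
      fix i assume "i < Suc k"
      then consider "i < k" | "i = k" by linarith
      then show "set (C2 i) \<subseteq> S \<union> (A - U)"
      proof cases
        case 1
        then have "set (C i) \<subseteq> S' \<union> (A - U')" using Cs by auto
        then show ?thesis using 1 unfolding C2_def S'_def U'_def by auto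
      next
        case 2 then show ?thesis using sc qS WA unfolding C2_def by auto
      qed
    qed
    moreover have "S \<subseteq> (\<Union>i<Suc k. set (C2 i))"
    proof
      fix z assume z: "z \<in> S"
      show "z \<in> (\<Union>i<Suc k. set (C2 i))"
      proof (cases "z \<in> set q")
        case True then have "z \<in> set (C2 k)" using sc unfolding C2_def by simp
        then show ?thesis by blast
      next
        case False
        then have "z \<in> S'" using z unfolding S'_def by simp
        then obtain i where "i < k" "z \<in> set (C i)" using Cc by blast
        then show ?thesis unfolding C2_def by (intro UN_I[of i]) auto
      qed
    qed
    ultimately show ?thesis by blast
  qed
qed

end

theorem lemma2p2:
  fixes r :: nat and A B :: "'a set" and c :: "'a set \<Rightarrow> 'c"
  assumes "r \<ge> 1"
    and "finite A" and "finite B" and "A \<inter> B = {}"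
    and "real (card B) \<le> real (card A) / real r ^ (r + 3)"
    and "local_colouring r A B c"
  shows "\<exists>k :: nat. \<exists>C :: nat \<Rightarrow> 'a list. \<exists>col :: nat \<Rightarrow> 'c.
           k \<le> r ^ 2 \<and>
           (\<forall>i<k. mono_cycle A B c (col i) (C i)) \<and>
           (\<forall>i<k. \<forall>j<k. i \<noteq> j \<longrightarrow> set (C i) \<inter> set (C j) = {}) \<and>
           B \<subseteq> (\<Union>i<k. set (C i))"
proof -
  have rp: "real r ^ (r + 3) > 0" using assms(1) by simp
  have "real (card B) * real r ^ (r + 3) \<le> real (card A)"
    using assms(5) rp by (simp add: le_divide_eq)
  then have "real (r ^ (r + 3) * card B) \<le> real (card A)" by (simp add: mult.commute)
  then have bnd: "r ^ (r + 3) * card B \<le> card A" by linarith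
  interpret L: lsetup r A B c using assms bnd by unfold_locales auto
  obtain k C col I where "I \<subseteq> B" "\<forall>u\<in>I. \<forall>v\<in>I. \<not> L.H u v" "k \<le> card I"
     "\<forall>i<k. mono_cycle A B c (col i) (C i)"
     "\<forall>i<k. \<forall>j<k. i \<noteq> j \<longrightarrow> set (C i) \<inter> set (C j) = {}"
     "B \<subseteq> (\<Union>i<k. set (C i))"
    using L.cover[OF assms(3) order_refl empty_subsetI] by (simp only: card.empty add_0 order_refl simp_thms Un_empty_left Diff_empty) blast
  moreover have "card I \<le> r^2" using L.indep_bound calculation by blast
  ultimately show ?thesis by (intro exI[of _ k] exI[of _ C] exI[of _ col]) auto
qed



end
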